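(* Let $I$ be an interval in $\mathcal{R}$ with endpoints $a<b$, and let $X\subseteq I$ be dense in $I$ (with respect to the order topology). Then every cover $(S_n)$ of $X$ satisfies $\sum_{n=1}^\infty l(S_n)\ge l(I)$; consequently $X$ is outer measurable and $M_u(X)=l(I)=b-a$.
   Context: $\mathcal{R}$ denotes the Levi-Civita field: functions $x:\mathbb{Q}\to\mathbb{R}$ with left-finite support, with componentwise addition and formal power series multiplication, ordered by $x>0$ iff $x\ne0$ and $x[\min\operatorname{supp}x]>0$; it is a non-Archimedean ordered field extension of $\mathbb{R}$, Cauchy complete in the order topology, in which all limits and series are taken (a series $\sum a_n$ converges iff $a_n\to0$). An interval is a set $[a,b],[a,b),(a,b]$ or $(a,b)$ with $a<b$ in $\mathcal{R}$, of length $l=b-a$. A cover of $A\subseteq\mathcal{R}$ is a sequence of intervals $(S_n)_{n\ge1}$ with $A\subseteq\bigcup_n S_n$ and $\sum_n l(S_n)$ convergent in $\mathcal{R}$. $A$ is called outer measurable if the infimum $\inf\{\sum_n l(S_n): (S_n)\text{ a cover of }A\}$ exists in $\mathcal{R}$; this infimum is then called the outer measure $M_u(A)$. *)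

theory Defs
  imports Complex_Main
begin

typedef levi_civita = "{x :: rat \<Rightarrow> real. \<forall>q. finite {r. r < q \<and> x r \<noteq> 0}}"
  morphisms coeff Abs_lc
  by (rule exI[of _ "\<lambda>_. 0"]) simp

definition lc_zero :: levi_civita where
  "lc_zero = Abs_lc (\<lambda>_. 0)"

definition lc_add :: "levi_civita \<Rightarrow> levi_civita \<Rightarrow> levi_civita" where
  "lc_add x y = Abs_lc (\<lambda>q. coeff x q + coeff y q)"

definition lc_neg :: "levi_civita \<Rightarrow> levi_civita" where
  "lc_neg x = Abs_lc (\<lambda>q. - coeff x q)"

definition lc_diff :: "levi_civita \<Rightarrow> levi_civita \<Rightarrow> levi_civita" where
  "lc_diff x y = lc_add x (lc_neg y)"

text \<open>Formal power series (Cauchy) product; the sum is finite by left-finiteness.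
  (Not needed for the statement, included for completeness of the field structure.)\<close>
definition lc_mult :: "levi_civita \<Rightarrow> levi_civita \<Rightarrow> levi_civita" where
  "lc_mult x y = Abs_lc (\<lambda>q. \<Sum>r\<in>{r. coeff x r \<noteq> 0 \<and> coeff y (q - r) \<noteq> 0}.
                               coeff x r * coeff y (q - r))"

definition lc_pos :: "levi_civita \<Rightarrow> bool" where
  "lc_pos x \<longleftrightarrow> x \<noteq> lc_zero \<and>
     (\<exists>q. coeff x q \<noteq> 0 \<and> (\<forall>r<q. coeff x r = 0) \<and> coeff x q > 0)"

definition lc_less :: "levi_civita \<Rightarrow> levi_civita \<Rightarrow> bool" where
  "lc_less x y \<longleftrightarrow> lc_pos (lc_diff y x)"

definition lc_le :: "levi_civita \<Rightarrow> levi_civita \<Rightarrow> bool" where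
  "lc_le x y \<longleftrightarrow> lc_less x y \<or> x = y"

definition lc_abs :: "levi_civita \<Rightarrow> levi_civita" where
  "lc_abs x = (if lc_less x lc_zero then lc_neg x else x)"

definition lc_tendsto :: "(nat \<Rightarrow> levi_civita) \<Rightarrow> levi_civita \<Rightarrow> bool" where
  "lc_tendsto f L \<longleftrightarrow>
     (\<forall>e. lc_less lc_zero e \<longrightarrow> (\<exists>N. \<forall>n\<ge>N. lc_less (lc_abs (lc_diff (f n) L)) e))"

primrec lc_psum :: "(nat \<Rightarrow> levi_civita) \<Rightarrow> nat \<Rightarrow> levi_civita" where
  "lc_psum f 0 = lc_zero"
| "lc_psum f (Suc n) = lc_add (lc_psum f n) (f n)"

definition lc_sums :: "(nat \<Rightarrow> levi_civita) \<Rightarrow> levi_civita \<Rightarrow> bool" where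
  "lc_sums f s \<longleftrightarrow> lc_tendsto (lc_psum f) s"

definition lc_summable :: "(nat \<Rightarrow> levi_civita) \<Rightarrow> bool" where
  "lc_summable f \<longleftrightarrow> (\<exists>s. lc_sums f s)"

definition lc_suminf :: "(nat \<Rightarrow> levi_civita) \<Rightarrow> levi_civita" where
  "lc_suminf f = (THE s. lc_sums f s)"

definition lc_open_int :: "levi_civita \<Rightarrow> levi_civita \<Rightarrow> levi_civita set" where
  "lc_open_int a b = {x. lc_less a x \<and> lc_less x b}"

definition lc_interval_ends :: "levi_civita \<Rightarrow> levi_civita \<Rightarrow> levi_civita set \<Rightarrow> bool" where
  "lc_interval_ends a b S \<longleftrightarrow> lc_less a b \<and>
     (S = {x. lc_le a x \<and> lc_le x b} \<or> S = {x. lc_le a x \<and> lc_less x b} \<or>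
      S = {x. lc_less a x \<and> lc_le x b} \<or> S = {x. lc_less a x \<and> lc_less x b})"

definition lc_is_interval :: "levi_civita set \<Rightarrow> bool" where
  "lc_is_interval S \<longleftrightarrow> (\<exists>a b. lc_interval_ends a b S)"

definition lc_length :: "levi_civita set \<Rightarrow> levi_civita" where
  "lc_length S = (THE l. \<exists>a b. lc_interval_ends a b S \<and> l = lc_diff b a)"

definition lc_cover :: "(nat \<Rightarrow> levi_civita set) \<Rightarrow> levi_civita set \<Rightarrow> bool" where
  "lc_cover S A \<longleftrightarrow> (\<forall>n. lc_is_interval (S n)) \<and> A \<subseteq> (\<Union>n. S n) \<and>
     lc_summable (\<lambda>n. lc_length (S n))"

definition lc_cover_sums :: "levi_civita set \<Rightarrow> levi_civita set" where
  "lc_cover_sums A = {lc_suminf (\<lambda>n. lc_length (S n)) | S. lc_cover S A}"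

definition lc_is_inf :: "levi_civita set \<Rightarrow> levi_civita \<Rightarrow> bool" where
  "lc_is_inf T m \<longleftrightarrow> (\<forall>t\<in>T. lc_le m t) \<and> (\<forall>m'. (\<forall>t\<in>T. lc_le m' t) \<longrightarrow> lc_le m' m)"

definition outer_measurable :: "levi_civita set \<Rightarrow> bool" where
  "outer_measurable A \<longleftrightarrow> (\<exists>m. lc_is_inf (lc_cover_sums A) m)"

definition outer_measure :: "levi_civita set \<Rightarrow> levi_civita" where
  "outer_measure A = (THE m. lc_is_inf (lc_cover_sums A) m)"

text \<open>Density of X in I w.r.t. the order topology: every basic open set (open interval)
  meeting I meets X.\<close>
definition lc_dense_in :: "levi_civita set \<Rightarrow> levi_civita set \<Rightarrow> bool" where
  "lc_dense_in X I \<longleftrightarrow> (\<forall>c d. lc_less c d \<and> lc_open_int c d \<inter> I \<noteq> {} \<longrightarrow>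
                                lc_open_int c d \<inter> X \<noteq> {})"

end

theory Submission
  imports Defs "HOL-Analysis.Continuum_Not_Denumerable"
begin


lemma coeff_lf: "finite {r. r < q \<and> coeff x r \<noteq> 0}"
  using coeff[of x] by auto

lemma coeff_Abs: "(\<And>q. finite {r. r < q \<and> f r \<noteq> 0}) \<Longrightarrow> coeff (Abs_lc f) = f"
  by (rule Abs_lc_inverse) auto

lemma coeff_zero[simp]: "coeff lc_zero q = 0"
  unfolding lc_zero_def by (subst coeff_Abs) auto

lemma coeff_add[simp]: "coeff (lc_add x y) q = coeff x q + coeff y q"
proof -
  have "\<And>q. finite {r. r < q \<and> coeff x r + coeff y r \<noteq> 0}"
  proof -
    fix q
    have "{r. r < q \<and> coeff x r + coeff y r \<noteq> 0} \<subseteq> {r. r < q \<and> coeff x r \<noteq> 0} \<union> {r. r < q \<and> coeff y r \<noteq> 0}"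
      by auto
    then show "finite {r. r < q \<and> coeff x r + coeff y r \<noteq> 0}"
      using coeff_lf finite_subset by blast
  qed
  then show ?thesis unfolding lc_add_def by (subst coeff_Abs) auto
qed

lemma coeff_neg[simp]: "coeff (lc_neg x) q = - coeff x q"
  unfolding lc_neg_def by (subst coeff_Abs) (auto simp: coeff_lf)

lemma coeff_diff[simp]: "coeff (lc_diff x y) q = coeff x q - coeff y q"
  unfolding lc_diff_def by simp

lemma lc_eqI: "(\<And>q. coeff x q = coeff y q) \<Longrightarrow> x = y"
  using coeff_inject by (metis ext)

lemma lead_exists:
  assumes "x \<noteq> lc_zero"
  shows "\<exists>q. coeff x q \<noteq> 0 \<and> (\<forall>r<q. coeff x r = 0)"
proof -
  obtain q0 where q0: "coeff x q0 \<noteq> 0"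
    using assms lc_eqI[of x lc_zero] by auto
  define A where "A = {r. r < q0 \<and> coeff x r \<noteq> 0}"
  have fA: "finite A" unfolding A_def by (rule coeff_lf)
  show ?thesis
  proof (cases "A = {}")
    case True
    then show ?thesis using q0 unfolding A_def by (intro exI[of _ q0]) auto
  next
    case False
    have m: "Min A \<in> A" using fA False by simp
    show ?thesis
    proof (intro exI[of _ "Min A"] conjI allI impI)
      show "coeff x (Min A) \<noteq> 0" using m unfolding A_def by simp
      fix r assume r: "r < Min A"
      show "coeff x r = 0"
      proof (rule ccontr)
        assume "coeff x r \<noteq> 0"
        then have "r \<in> A" using r m unfolding A_def by auto
        then show False using Min_le[OF fA] r by fastforce
      qed
    qed
  qed
qed

lemma lead_unique:
  assumes "coeff x q \<noteq> 0" "\<forall>r<q. coeff x r = 0" "coeff x q' \<noteq> 0" "\<forall>r<q'. coeff x r = 0"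
  shows "q = q'"
  using assms by (metis linorder_neqE)

lemma lc_pos_iff: "lc_pos x \<longleftrightarrow> (\<exists>q. coeff x q > 0 \<and> (\<forall>r<q. coeff x r = 0))"
  unfolding lc_pos_def
  by (metis coeff_zero less_irrefl)

lemma lc_posI: "(\<And>r. r < q \<Longrightarrow> coeff x r = 0) \<Longrightarrow> coeff x q > 0 \<Longrightarrow> lc_pos x"
  unfolding lc_pos_iff by blast

lemma lc_pos_add: "lc_pos x \<Longrightarrow> lc_pos y \<Longrightarrow> lc_pos (lc_add x y)"
proof -
  assume "lc_pos x" "lc_pos y"
  then obtain q p where q: "coeff x q > 0" "\<forall>r<q. coeff x r = 0"
    and p: "coeff y p > 0" "\<forall>r<p. coeff y r = 0" unfolding lc_pos_iff by blast
  show ?thesis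
  proof (rule lc_posI[of "min q p"])
    fix r assume "r < min q p" then show "coeff (lc_add x y) r = 0" using q p by simp
  next
    show "coeff (lc_add x y) (min q p) > 0"
      using q p by (cases q p rule: linorder_cases) (auto simp: min_def)
  qed
qed

lemma lc_pos_neg: "lc_pos x \<Longrightarrow> \<not> lc_pos (lc_neg x)"
  unfolding lc_pos_iff by (auto, metis coeff_neg less_irrefl lead_unique neg_0_less_iff_less not_less_iff_gr_or_eq)

lemma lc_tri: "x \<noteq> lc_zero \<Longrightarrow> lc_pos x \<or> lc_pos (lc_neg x)"
proof -
  assume "x \<noteq> lc_zero"
  from lead_exists[OF this] obtain q where q: "coeff x q \<noteq> 0" "\<forall>r<q. coeff x r = 0" by blast
  show ?thesis
  proof (cases "coeff x q > 0")
    case True then show ?thesis using q by (auto intro: lc_posI)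
  next
    case False then have "coeff (lc_neg x) q > 0" using q by simp
    then show ?thesis using q by (auto intro!: lc_posI[of q])
  qed
qed

lemma lc_not_pos_zero: "\<not> lc_pos lc_zero"
  unfolding lc_pos_def by simp



instantiation levi_civita :: linordered_ab_group_add
begin
definition "0 = lc_zero"
definition "x + y = lc_add x y"
definition "- x = lc_neg x"
definition "x - y = lc_diff x y"
definition "x < y \<longleftrightarrow> lc_less x y"
definition "x \<le> y \<longleftrightarrow> lc_le x y"

lemma coeff_simps[simp]:
  "coeff 0 q = 0" "coeff (x + y) q = coeff x q + coeff y q" "coeff (- x) q = - coeff x q"
  "coeff (x - y) q = coeff x q - coeff y q"
  by (simp_all add: zero_levi_civita_def plus_levi_civita_def uminus_levi_civita_def minus_levi_civita_def)

instance
proof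
  fix x y z :: levi_civita
  show "x + y + z = x + (y + z)" by (rule lc_eqI) simp
  show "x + y = y + x" by (rule lc_eqI) simp
  show "0 + x = x" by (rule lc_eqI) simp
  show "- x + x = 0" by (rule lc_eqI) simp
  show "x - y = x + - y" by (rule lc_eqI) simp
  have d: "lc_diff y x = y - x" for x y by (simp add: minus_levi_civita_def)
  have pn: "lc_pos (y - x) \<Longrightarrow> \<not> lc_pos (x - y)" for x y
  proof -
    have "x - y = lc_neg (y - x)" by (rule lc_eqI) simp
    then show "lc_pos (y - x) \<Longrightarrow> \<not> lc_pos (x - y)" using lc_pos_neg by simp
  qed
  have lt: "x < y \<longleftrightarrow> lc_pos (y - x)" for x y by (simp add: less_levi_civita_def lc_less_def d)
  have le: "x \<le> y \<longleftrightarrow> lc_pos (y - x) \<or> x = y" for x y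
    by (simp add: less_eq_levi_civita_def lc_le_def lc_less_def d)
  have z: "x - x = lc_zero" for x by (rule lc_eqI) simp
  show "x \<le> x" by (simp add: le)
  show "(x < y) = (x \<le> y \<and> \<not> y \<le> x)"
    using pn[of x y] z lc_not_pos_zero unfolding lt le by auto
  show "x \<le> y \<Longrightarrow> y \<le> z \<Longrightarrow> x \<le> z"
  proof -
    assume a: "x \<le> y" "y \<le> z"
    have "z - x = lc_add (z - y) (y - x)" by (rule lc_eqI) simp
    then show ?thesis using a lc_pos_add unfolding le by auto
  qed
  show "x \<le> y \<Longrightarrow> y \<le> x \<Longrightarrow> x = y" using pn unfolding le by auto
  show "x \<le> y \<Longrightarrow> z + x \<le> z + y"
  proof -
    have "z + y - (z + x) = y - x" by (rule lc_eqI) simp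
    then show "x \<le> y \<Longrightarrow> z + x \<le> z + y" unfolding le by auto
  qed
  show "x \<le> y \<or> y \<le> x"
  proof (cases "x = y")
    case False
    have "y - x \<noteq> lc_zero"
    proof
      assume "y - x = lc_zero"
      then have "coeff (y - x) q = 0" for q by simp
      then have "x = y" by (intro lc_eqI) (simp only: coeff_simps(4), simp)
      then show False using False by simp
    qed
    then have "lc_pos (y - x) \<or> lc_pos (lc_neg (y - x))" by (rule lc_tri)
    moreover have "lc_neg (y - x) = x - y" by (rule lc_eqI) simp
    ultimately show ?thesis unfolding le by auto
  qed (simp add: le)
qed
end

lemma lc_ops[simp]: "lc_zero = 0" "lc_add x y = x + y" "lc_neg x = - x" "lc_diff x y = x - y"
  "lc_less x y = (x < y)" "lc_le x y = (x \<le> y)"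
  by (simp_all add: zero_levi_civita_def plus_levi_civita_def uminus_levi_civita_def minus_levi_civita_def
     less_levi_civita_def less_eq_levi_civita_def)

lemma lc_pos_less: "lc_pos x \<longleftrightarrow> 0 < x"
proof -
  have "0 < x \<longleftrightarrow> lc_pos (lc_diff x lc_zero)"
    by (simp only: less_levi_civita_def lc_less_def zero_levi_civita_def)
  also have "lc_diff x lc_zero = x" by simp
  finally show ?thesis by simp
qed



lemma posI: "(\<And>r. r < q \<Longrightarrow> coeff x r = 0) \<Longrightarrow> coeff x q > 0 \<Longrightarrow> (0::levi_civita) < x"
  using lc_posI lc_pos_less by blast

lemma negI: "(\<And>r. r < q \<Longrightarrow> coeff x r = 0) \<Longrightarrow> coeff x q < 0 \<Longrightarrow> x < (0::levi_civita)"
proof -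
  assume "\<And>r. r < q \<Longrightarrow> coeff x r = 0" "coeff x q < 0"
  then have "0 < - x" by (intro posI[of q]) auto
  then show ?thesis by simp
qed

lemma pos_lead: "(0::levi_civita) < x \<Longrightarrow> \<exists>q. coeff x q > 0 \<and> (\<forall>r<q. coeff x r = 0)"
  using lc_pos_iff lc_pos_less by blast

definition mon :: "rat \<Rightarrow> real \<Rightarrow> levi_civita" where
  "mon q c = Abs_lc (\<lambda>r. if r = q then c else 0)"

lemma coeff_mon[simp]: "coeff (mon q c) r = (if r = q then c else 0)"
proof -
  have "\<And>s. finite {r. r < s \<and> (if r = q then c else 0) \<noteq> 0}"
    by (rule finite_subset[of _ "{q}"]) auto
  then show ?thesis unfolding mon_def by (subst coeff_Abs) auto
qed

lemma mon_add: "mon q (a + b) = mon q a + mon q b"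
  by (rule lc_eqI) simp

lemma mon_zero[simp]: "mon q 0 = 0"
  by (rule lc_eqI) simp

lemma mon_sum: "finite A \<Longrightarrow> mon q (\<Sum>i\<in>A. f i) = (\<Sum>i\<in>A. mon q (f i))"
  by (induction A rule: finite_induct) (auto simp: mon_add)

lemma mon_pos: "c > 0 \<Longrightarrow> 0 < mon q c"
  by (rule posI[of q]) auto

definition small :: "rat \<Rightarrow> levi_civita \<Rightarrow> bool" where
  "small p x \<longleftrightarrow> (\<forall>r\<le>p. coeff x r = 0)"

lemma small_add: "small p x \<Longrightarrow> small p y \<Longrightarrow> small p (x + y)"
  and small_diff: "small p x \<Longrightarrow> small p y \<Longrightarrow> small p (x - y)"
  and small_neg: "small p (- x) \<longleftrightarrow> small p x"
  and small_0: "small p 0"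
  unfolding small_def by auto

lemma small_mon: "p < q \<Longrightarrow> small p (mon q c)"
  unfolding small_def by auto

lemma small_mono:
  assumes "0 \<le> x" "x \<le> y" "small p y"
  shows "small p x"
proof (rule ccontr)
  assume ns: "\<not> small p x"
  then have "x \<noteq> 0" using small_0 by auto
  with assms have "0 < x" by simp
  then obtain q where q: "coeff x q > 0" "\<forall>r<q. coeff x r = 0" using pos_lead by blast
  from ns obtain r where r: "r \<le> p" "coeff x r \<noteq> 0" unfolding small_def by auto
  have "q \<le> r" using q(2) r(2) by (meson not_less)
  then have qp: "q \<le> p" using r by simp
  have "y - x < 0"
  proof (rule negI[of q])
    fix s assume "s < q" then show "coeff (y - x) s = 0"
      using q assms(3) qp unfolding small_def by simp
  next
    show "coeff (y - x) q < 0" using q assms(3) qp unfolding small_def by simp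
  qed
  then show False using assms(2) by simp
qed

lemma small_less: "small p z \<Longrightarrow> c > 0 \<Longrightarrow> z < mon p c"
proof -
  assume a: "small p z" "c > 0"
  have "0 < mon p c - z"
    by (rule posI[of p]) (use a in \<open>auto simp: small_def\<close>)
  then show ?thesis by simp
qed

lemma lc_abs_eq[simp]: "lc_abs x = (if x < 0 then - x else x)"
  unfolding lc_abs_def by simp

lemma lc_abs_less: "lc_abs x < e \<longleftrightarrow> - e < x \<and> x < e"
proof (cases "x < 0")
  case True
  have 1: "- x < e \<longleftrightarrow> - e < x" by (simp add: minus_less_iff)
  have 2: "- e < x \<Longrightarrow> x < e"
  proof -
    assume "- e < x"
    then have "- e < 0" using True by (rule order.strict_trans)
    then have "0 < e" by simp
    then show "x < e" using True by (rule order.strict_trans[rotated])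
  qed
  show ?thesis using True 1 2 by auto
next
  case False
  have 2: "x < e \<Longrightarrow> - e < x"
  proof -
    assume "x < e"
    then have "0 < e" using False by (meson le_less_trans not_less)
    then have "- e < 0" by simp
    then show "- e < x" using False by (meson less_le_trans not_less)
  qed
  show ?thesis using False 2 by auto
qed

lemma bounded_small:
  assumes "- w < x" "x < w" "small p w"
  shows "small p x"
proof (cases "x < 0")
  case True
  have a: "0 \<le> - x" using True by simp
  have b: "- x \<le> w" using assms(1) by (simp add: minus_less_iff less_imp_le)
  have "small p (- x)" using small_mono[OF a b assms(3)] .
  then show ?thesis by (simp add: small_neg)
next
  case False
  then have a: "0 \<le> x" by (simp add: not_less)
  show ?thesis using small_mono[OF a less_imp_le[OF assms(2)] assms(3)] .
qed

lemma lc_dense: "x < (y::levi_civita) \<Longrightarrow> \<exists>z. x < z \<and> z < y"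
proof -
  assume "x < y"
  then have "0 < y - x" by simp
  then obtain q where q: "coeff (y - x) q > 0" "\<forall>r<q. coeff (y - x) r = 0" using pos_lead by blast
  have "0 < y - (x + mon (q+1) 1)"
  proof (rule posI[of q])
    fix r assume r: "r < q"
    then have "r \<noteq> q + 1" by linarith
    then show "coeff (y - (x + mon (q + 1) 1)) r = 0" using q(2) r by (simp add: algebra_simps)
  next
    show "coeff (y - (x + mon (q + 1) 1)) q > 0" using q(1) by (simp add: algebra_simps)
  qed
  then have 1: "x + mon (q+1) 1 < y" by simp
  have 2: "x < x + mon (q+1) 1" using mon_pos[of 1 "q+1"] by simp
  show ?thesis using 1 2 by blast
qed



lemma half_exists: "0 < (d::levi_civita) \<Longrightarrow> \<exists>e>0. e + e < d"
proof -
  assume "0 < d"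
  then obtain q where q: "coeff d q > 0" "\<forall>r<q. coeff d r = 0" using pos_lead by blast
  have "0 < d - (mon q (coeff d q / 4) + mon q (coeff d q / 4))"
    by (rule posI[of q]) (use q in auto)
  then show ?thesis using mon_pos[of "coeff d q / 4" q] q(1)
    by (intro exI[of _ "mon q (coeff d q / 4)"]) simp
qed

lemma tendsto_unique_aux:
  assumes "lc_tendsto f L" "lc_tendsto f L'" "L < L'"
  shows False
proof -
  obtain e where e: "0 < e" "e + e < L' - L" using half_exists[of "L' - L"] assms(3) by auto
  obtain N1 where N1: "\<forall>n\<ge>N1. lc_abs (f n - L) < e" using assms(1) e(1) unfolding lc_tendsto_def by auto
  obtain N2 where N2: "\<forall>n\<ge>N2. lc_abs (f n - L') < e" using assms(2) e(1) unfolding lc_tendsto_def by auto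
  define n where "n = max N1 N2"
  have a: "f n - L < e" using N1 unfolding n_def lc_abs_less by auto
  have b: "- e < f n - L'" using N2 unfolding n_def lc_abs_less by auto
  have b': "- (f n - L') < e" using b minus_less_iff by blast
  have "L' - L = (f n - L) + (- (f n - L'))" by (simp add: algebra_simps)
  also have "\<dots> < e + e" using add_strict_mono[OF a b'] .
  finally show False using e(2) by simp
qed

lemma tendsto_unique: "lc_tendsto f L \<Longrightarrow> lc_tendsto f L' \<Longrightarrow> L = L'"
  by (metis linorder_neqE tendsto_unique_aux)

lemma suminf_eq: "lc_sums f s \<Longrightarrow> lc_suminf f = s"
  unfolding lc_suminf_def lc_sums_def using tendsto_unique by blast

lemma psum_sum: "lc_psum f n = (\<Sum>i<n. f i)"
  by (induction n) simp_all

lemma psum_le: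
  assumes nn: "\<And>n. 0 \<le> f n" and s: "lc_sums f s"
  shows "lc_psum f N \<le> s"
proof (rule ccontr)
  assume "\<not> lc_psum f N \<le> s"
  then have "0 < lc_psum f N - s" by simp
  then obtain M where M: "\<forall>n\<ge>M. lc_abs (lc_psum f n - s) < lc_psum f N - s"
    using s unfolding lc_sums_def lc_tendsto_def lc_ops by blast
  define n where "n = max M N"
  have "lc_psum f N \<le> lc_psum f n" unfolding psum_sum n_def
    by (rule sum_mono2) (use nn in auto)
  moreover have "lc_psum f n - s < lc_psum f N - s" using M unfolding n_def lc_abs_less by auto
  ultimately show False by simp
qed

lemma terms_small:
  assumes s: "lc_sums f s"
  shows "\<exists>N. \<forall>n\<ge>N. small p (f n)"
proof -
  define e where "e = mon (p+1) (1/2)"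
  have e0: "0 < e" unfolding e_def by (rule mon_pos) simp
  obtain N where N: "\<forall>n\<ge>N. lc_abs (lc_psum f n - s) < e"
    using s e0 unfolding lc_sums_def lc_tendsto_def by auto
  have ee: "e + e = mon (p+1) 1" unfolding e_def by (simp flip: mon_add)
  have sw: "small p (mon (p+1) 1)" by (rule small_mon) simp
  show ?thesis
  proof (intro exI allI impI)
    fix n assume n: "N \<le> n"
    have a: "- e < lc_psum f n - s" "lc_psum f n - s < e" using N n unfolding lc_abs_less by auto
    have b: "- e < lc_psum f (Suc n) - s" "lc_psum f (Suc n) - s < e" using N[rule_format, of "Suc n"] n unfolding lc_abs_less by auto
    have fn: "f n = (lc_psum f (Suc n) - s) + (- (lc_psum f n - s))" by (simp add: algebra_simps)
    have a2: "- (lc_psum f n - s) < e" using a(1) minus_less_iff by blast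
    have a3: "- e < - (lc_psum f n - s)" using a(2) minus_less_iff by (metis minus_minus)
    have "f n < e + e" unfolding fn using add_strict_mono[OF b(2) a2] .
    moreover have "- e + - e < f n" unfolding fn using add_strict_mono[OF b(1) a3] .
    moreover have "- e + - e = - (e + e)" by simp
    ultimately show "small p (f n)" using bounded_small[of "e + e" "f n" p] sw ee by simp
  qed
qed

lemma interval_sub:
  assumes "lc_interval_ends a b S"
  shows "S \<subseteq> {x. a \<le> x \<and> x \<le> b}" "{x. a < x \<and> x < b} \<subseteq> S" "a < b"
  using assms unfolding lc_interval_ends_def by auto

lemma ends_unique_aux:
  assumes "lc_interval_ends a b S" "lc_interval_ends a' b' S"
  shows "\<not> a < a'" "\<not> b' < b"
proof -
  note s1 = interval_sub[OF assms(1)] and s2 = interval_sub[OF assms(2)]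
  show "\<not> a < a'"
  proof
    assume aa: "a < a'"
    obtain z where z: "a < z" "z < min a' b" using lc_dense[of a "min a' b"] aa s1(3) by auto
    then have "z \<in> S" using s1(2) by auto
    then show False using s2(1) z by auto
  qed
  show "\<not> b' < b"
  proof
    assume bb: "b' < b"
    obtain z where z: "max b' a < z" "z < b" using lc_dense[of "max b' a" b] bb s1(3) by auto
    then have "z \<in> S" using s1(2) by auto
    then show False using s2(1) z by auto
  qed
qed

lemma ends_unique:
  assumes "lc_interval_ends a b S" "lc_interval_ends a' b' S"
  shows "a = a' \<and> b = b'"
  using ends_unique_aux[OF assms] ends_unique_aux[OF assms(2,1)] by auto

lemma length_eq: "lc_interval_ends a b S \<Longrightarrow> lc_length S = b - a"
  unfolding lc_length_def
  by (rule the_equality) (auto dest: ends_unique)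



lemma fin_cover:
  fixes lo hi :: "nat \<Rightarrow> levi_civita"
  assumes "finite F" "\<forall>n\<in>F. lo n \<le> hi n" "0 \<le> e"
    "\<forall>c. a \<le> c \<and> c + e \<le> b \<longrightarrow> (\<exists>n\<in>F. \<exists>y. c < y \<and> y < c + e \<and> lo n \<le> y \<and> y \<le> hi n)"
  shows "b - a \<le> (\<Sum>n\<in>F. hi n - lo n + e) + e"
  using assms
proof (induction "card F" arbitrary: F a rule: less_induct)
  case less
  note fin = less.prems(1) and lohi = less.prems(2) and e0 = less.prems(3) and cov = less.prems(4)
  have tnn: "0 \<le> hi n - lo n + e" if "n \<in> F" for n
    using lohi that e0 by (simp add: add_nonneg_nonneg)
  have snn: "0 \<le> (\<Sum>n\<in>G. hi n - lo n + e)" if "G \<subseteq> F" for G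
    using tnn that by (intro sum_nonneg) auto
  show ?case
  proof (cases "b - a \<le> e")
    case True
    then show ?thesis using snn[of F] by (metis add_increasing order_refl)
  next
    case False
    then have "a + e \<le> b" by (simp add: algebra_simps)
    then obtain n y where n: "n \<in> F" and y: "a < y" "y < a + e" "lo n \<le> y" "y \<le> hi n"
      using cov by auto
    have key: "hi n - a \<le> hi n - lo n + e"
    proof -
      have "lo n < a + e" using y by simp
      then have "hi n - a < hi n - lo n + e" by (simp add: algebra_simps)
      then show ?thesis by simp
    qed
    have split: "(\<Sum>n\<in>F. hi n - lo n + e) = (hi n - lo n + e) + (\<Sum>n\<in>F - {n}. hi n - lo n + e)"
      using fin n by (simp add: sum.remove)
    show ?thesis
    proof (cases "b \<le> hi n")
      case True
      have "b - a \<le> hi n - a" using True by simp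
      also have "\<dots> \<le> hi n - lo n + e" by (rule key)
      also have "\<dots> \<le> (\<Sum>n\<in>F. hi n - lo n + e) + e"
        unfolding split using snn[of "F - {n}"] e0 by (simp add: add_increasing2 add_nonneg_nonneg)
      finally show ?thesis .
    next
      case False
      have IH: "b - hi n \<le> (\<Sum>n\<in>F - {n}. hi n - lo n + e) + e"
      proof (rule less.hyps[of "F - {n}" "hi n"])
        show "card (F - {n}) < card F" using fin n by (meson card_Diff1_less)
        show "finite (F - {n})" using fin by simp
        show "\<forall>m\<in>F - {n}. lo m \<le> hi m" using lohi by simp
        show "0 \<le> e" by (rule e0)
        show "\<forall>c. hi n \<le> c \<and> c + e \<le> b \<longrightarrow> (\<exists>m\<in>F - {n}. \<exists>y. c < y \<and> y < c + e \<and> lo m \<le> y \<and> y \<le> hi m)"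
        proof (intro allI impI)
          fix c assume c: "hi n \<le> c \<and> c + e \<le> b"
          then have "a \<le> c" using y by (meson order.trans less_imp_le)
          then obtain m z where m: "m \<in> F" "c < z" "z < c + e" "lo m \<le> z" "z \<le> hi m"
            using cov c by blast
          have "m \<noteq> n" using m c by auto
          then show "\<exists>m\<in>F - {n}. \<exists>y. c < y \<and> y < c + e \<and> lo m \<le> y \<and> y \<le> hi m"
            using m by blast
        qed
      qed
      have "b - a = (b - hi n) + (hi n - a)" by (simp add: algebra_simps)
      also have "\<dots> \<le> ((\<Sum>n\<in>F - {n}. hi n - lo n + e) + e) + (hi n - lo n + e)"
        using IH key by (rule add_mono)
      also have "\<dots> = (\<Sum>n\<in>F. hi n - lo n + e) + e" unfolding split by (simp add: algebra_simps)
      finally show ?thesis .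
    qed
  qed
qed



lemma small_between:
  assumes "lo \<le> x" "x \<le> hi" "lo \<le> y" "y \<le> hi" "small p (hi - lo)"
  shows "small p (x - y)"
proof (cases "0 \<le> x - y")
  case True
  have "x - y \<le> hi - lo" using assms by (intro diff_mono) auto
  then show ?thesis using small_mono[OF True _ assms(5)] by simp
next
  case False
  then have a: "0 \<le> y - x" by simp
  have "y - x \<le> hi - lo" using assms by (intro diff_mono) auto
  then have "small p (y - x)" using small_mono[OF a _ assms(5)] by simp
  then have "small p (- (x - y))" by simp
  then show ?thesis by (simp only: small_neg)
qed

lemma hit_F:
  fixes S :: "nat \<Rightarrow> levi_civita set" and lo hi :: "nat \<Rightarrow> levi_civita"
  assumes ends: "\<forall>n. lc_interval_ends (lo n) (hi n) (S n)"
    and XS: "X \<subseteq> (\<Union>n. S n)" and abI: "{x. a < x \<and> x < b} \<subseteq> I" and dense: "lc_dense_in X I"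
    and smallF: "\<forall>n. n \<notin> F \<longrightarrow> small p (hi n - lo n)"
    and eps: "\<epsilon> > 0" and c: "a \<le> c" "c + mon p \<epsilon> \<le> b"
  shows "\<exists>n\<in>F. \<exists>y. c < y \<and> y < c + mon p \<epsilon> \<and> lo n \<le> y \<and> y \<le> hi n"
proof (rule ccontr)
  assume nohit: "\<not> ?thesis"
  define w where "w = mon (p+1) 1"
  have w0: "0 < w" unfolding w_def by (rule mon_pos) simp
  have sw: "small p w" unfolding w_def by (rule small_mon) simp
  have cw: "coeff w r = 0" if "r \<le> p" for r using sw that unfolding small_def by simp
  define z where "z t = c + mon p (\<epsilon> * t)" for t
  define A where "A = {0<..<(1::real)}"
  have ex: "\<exists>x. x \<in> X \<and> z t - w < x \<and> x < z t + w" if t: "t \<in> A" for t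
  proof -
    have t01: "0 < t" "t < 1" using t unfolding A_def by auto
    have "0 < mon p (\<epsilon> * t)" using eps t01 by (intro mon_pos) simp
    then have "c < z t" unfolding z_def by simp
    then have az: "a < z t" using c(1) by (meson le_less_trans)
    have "mon p \<epsilon> = mon p (\<epsilon> * t) + mon p (\<epsilon> * (1 - t))"
      by (simp flip: mon_add add: algebra_simps)
    moreover have "0 < mon p (\<epsilon> * (1 - t))" using eps t01 by (intro mon_pos) simp
    ultimately have "z t < c + mon p \<epsilon>" unfolding z_def by (simp add: algebra_simps)
    then have zb: "z t < b" using c(2) by simp
    have "z t \<in> I" using abI az zb by auto
    moreover have "z t - w < z t" "z t < z t + w" using w0 by simp_all
    ultimately have "z t \<in> lc_open_int (z t - w) (z t + w) \<inter> I"
      unfolding lc_open_int_def by simp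
    then have "lc_open_int (z t - w) (z t + w) \<inter> I \<noteq> {}" by blast
    moreover have "z t - w < z t + w" using w0 by (simp add: algebra_simps add_pos_pos)
    ultimately have "lc_open_int (z t - w) (z t + w) \<inter> X \<noteq> {}"
      using dense unfolding lc_dense_in_def by simp
    then show ?thesis unfolding lc_open_int_def by auto
  qed
  define xt where "xt t = (SOME x. x \<in> X \<and> z t - w < x \<and> x < z t + w)" for t
  have xt: "xt t \<in> X" "z t - w < xt t" "xt t < z t + w" if "t \<in> A" for t
    using someI_ex[OF ex[OF that]] unfolding xt_def by auto
  have ex2: "\<exists>n. xt t \<in> S n" if "t \<in> A" for t using xt(1)[OF that] XS by auto
  define nt where "nt t = (SOME n. xt t \<in> S n)" for t
  have nt: "xt t \<in> S (nt t)" if "t \<in> A" for t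
    using someI_ex[OF ex2[OF that]] unfolding nt_def by auto
  have inS: "lo (nt t) \<le> xt t \<and> xt t \<le> hi (nt t)" if "t \<in> A" for t
    using nt[OF that] interval_sub(1)[OF ends[rule_format, of "nt t"]] by auto
  have sm: "small p (xt t - z t)" if "t \<in> A" for t
  proof (rule bounded_small[OF _ _ sw])
    show "- w < xt t - z t" using xt(2)[OF that] by (simp add: algebra_simps)
    show "xt t - z t < w" using xt(3)[OF that] by (simp add: algebra_simps)
  qed
  have cxt: "coeff (xt t) p = coeff c p + \<epsilon> * t" if "t \<in> A" for t
    using sm[OF that] unfolding small_def z_def by simp
  have inbox: "c < xt t \<and> xt t < c + mon p \<epsilon>" if t: "t \<in> A" for t
  proof -
    have t01: "0 < t" "t < 1" using t unfolding A_def by auto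
    have 1: "0 < mon p (\<epsilon> * t) - w"
      by (rule posI[of p]) (use cw eps t01 in auto)
    have 2: "0 < mon p (\<epsilon> * (1 - t)) - w"
      by (rule posI[of p]) (use cw eps t01 in auto)
    have "c < z t - w" using 1 unfolding z_def by (simp add: algebra_simps)
    moreover have "z t + w < c + mon p \<epsilon>"
    proof -
      have "mon p \<epsilon> = mon p (\<epsilon> * t) + mon p (\<epsilon> * (1 - t))"
        by (simp flip: mon_add add: algebra_simps)
      then show ?thesis using 2 unfolding z_def by (simp add: algebra_simps)
    qed
    ultimately show ?thesis using xt(2,3)[OF t] by auto
  qed
  have notF: "nt t \<notin> F" if "t \<in> A" for t
  proof
    assume "nt t \<in> F"
    then have "\<exists>n\<in>F. \<exists>y. c < y \<and> y < c + mon p \<epsilon> \<and> lo n \<le> y \<and> y \<le> hi n"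
      using inbox[OF that] inS[OF that] by (intro bexI[of _ "nt t"] exI[of _ "xt t"]) auto
    then show False using nohit by simp
  qed
  have "inj_on nt A"
  proof (rule inj_onI)
    fix t s assume t: "t \<in> A" and s: "s \<in> A" and eq: "nt t = nt s"
    have sn: "small p (hi (nt t) - lo (nt t))" using smallF notF[OF t] by blast
    have b1: "lo (nt t) \<le> xt t" "xt t \<le> hi (nt t)" using inS[OF t] by auto
    have b2: "lo (nt t) \<le> xt s" "xt s \<le> hi (nt t)" using inS[OF s] eq by auto
    have "small p (xt t - xt s)" using small_between[OF b1 b2 sn] .
    then have "coeff (xt t - xt s) p = 0" unfolding small_def by simp
    then have "coeff (xt t) p = coeff (xt s) p" by simp
    then have "\<epsilon> * t = \<epsilon> * s" using cxt[OF t] cxt[OF s] by simp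
    then show "t = s" using eps by simp
  qed
  then have "countable A" by (rule countable_image_inj_on[rotated]) simp
  then show False unfolding A_def using uncountable_open_interval[of 0 1] by simp
qed



lemma lower_bound:
  assumes endsI: "lc_interval_ends a b I" and XI: "X \<subseteq> I" and dense: "lc_dense_in X I"
    and cov: "lc_cover S X"
  shows "b - a \<le> lc_suminf (\<lambda>n. lc_length (S n))"
proof -
  have "\<forall>n. \<exists>l h. lc_interval_ends l h (S n)" using cov unfolding lc_cover_def lc_is_interval_def by blast
  then obtain lo hi where ends: "\<forall>n. lc_interval_ends (lo n) (hi n) (S n)" by metis
  have len: "lc_length (S n) = hi n - lo n" for n using length_eq ends by blast
  have lohi: "lo n < hi n" for n using interval_sub(3) ends by blast
  obtain \<sigma> where sig: "lc_sums (\<lambda>n. lc_length (S n)) \<sigma>" using cov unfolding lc_cover_def lc_summable_def by blast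
  have sinf: "lc_suminf (\<lambda>n. lc_length (S n)) = \<sigma>" using suminf_eq[OF sig] .
  have XS: "X \<subseteq> (\<Union>n. S n)" using cov unfolding lc_cover_def by blast
  show ?thesis unfolding sinf
  proof (rule ccontr)
    assume "\<not> b - a \<le> \<sigma>"
    then have "0 < (b - a) - \<sigma>" by simp
    then obtain p where p: "coeff ((b - a) - \<sigma>) p > 0" "\<forall>r<p. coeff ((b - a) - \<sigma>) r = 0"
      using pos_lead by blast
    define c0 where "c0 = coeff ((b - a) - \<sigma>) p"
    obtain N where N: "\<forall>n\<ge>N. small p (lc_length (S n))" using terms_small[OF sig] by blast
    define F where "F = {n. \<not> small p (hi n - lo n)}"
    have FN: "F \<subseteq> {..<N}" using N unfolding F_def len by (auto simp: not_less[symmetric])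
    have finF: "finite F" using FN finite_subset by blast
    define k where "k = card F"
    define \<epsilon> where "\<epsilon> = c0 / (2 * (real k + 1))"
    have eps: "\<epsilon> > 0" unfolding \<epsilon>_def c0_def using p(1) by simp
    have abI: "{x. a < x \<and> x < b} \<subseteq> I" using interval_sub(2)[OF endsI] .
    have hit: "\<forall>c. a \<le> c \<and> c + mon p \<epsilon> \<le> b \<longrightarrow>
        (\<exists>n\<in>F. \<exists>y. c < y \<and> y < c + mon p \<epsilon> \<and> lo n \<le> y \<and> y \<le> hi n)"
    proof (intro allI impI)
      fix c assume c: "a \<le> c \<and> c + mon p \<epsilon> \<le> b"
      show "\<exists>n\<in>F. \<exists>y. c < y \<and> y < c + mon p \<epsilon> \<and> lo n \<le> y \<and> y \<le> hi n"
        by (rule hit_F[OF ends XS abI dense _ eps]) (use c in \<open>auto simp: F_def\<close>)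
    qed
    have e0: "0 \<le> mon p \<epsilon>" using mon_pos[OF eps, of p] by simp
    have fc: "b - a \<le> (\<Sum>n\<in>F. hi n - lo n + mon p \<epsilon>) + mon p \<epsilon>"
      by (rule fin_cover[OF finF _ e0 hit]) (simp add: less_imp_le lohi)
    have "(\<Sum>n\<in>F. hi n - lo n + mon p \<epsilon>) + mon p \<epsilon>
        = (\<Sum>n\<in>F. hi n - lo n) + (mon p (real k * \<epsilon>) + mon p \<epsilon>)"
    proof -
      have "(\<Sum>n\<in>F. hi n - lo n + mon p \<epsilon>) = (\<Sum>n\<in>F. hi n - lo n) + (\<Sum>n\<in>F. mon p \<epsilon>)"
        by (rule sum.distrib)
      moreover have "(\<Sum>n\<in>F. mon p \<epsilon>) = mon p (real k * \<epsilon>)"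
        using mon_sum[OF finF, of p "\<lambda>_. \<epsilon>"] by (simp add: k_def)
      ultimately show ?thesis by (simp add: add.assoc)
    qed
    also have "mon p (real k * \<epsilon>) + mon p \<epsilon> = mon p (c0 / 2)"
    proof -
      have kp: "real k + 1 \<noteq> 0" by simp
      have "real k * \<epsilon> + \<epsilon> = (real k + 1) * \<epsilon>" by (simp add: algebra_simps)
      also have "\<dots> = c0 / 2" unfolding \<epsilon>_def using kp by (simp add: divide_simps)
      finally have "real k * \<epsilon> + \<epsilon> = c0 / 2" .
      then show ?thesis by (metis mon_add)
    qed
    finally have fc2: "b - a \<le> (\<Sum>n\<in>F. hi n - lo n) + mon p (c0 / 2)" using fc by simp
    have "(\<Sum>n\<in>F. hi n - lo n) \<le> (\<Sum>n<N. hi n - lo n)"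
      by (rule sum_mono2) (use FN lohi in \<open>auto simp: less_imp_le\<close>)
    also have "\<dots> = lc_psum (\<lambda>n. lc_length (S n)) N" unfolding psum_sum len ..
    also have "\<dots> \<le> \<sigma>" by (rule psum_le[OF _ sig]) (simp add: len less_imp_le lohi)
    finally have "b - a \<le> \<sigma> + mon p (c0 / 2)" using fc2 by (metis add_right_mono order.trans)
    then have 1: "(b - a) - \<sigma> \<le> mon p (c0 / 2)" by (simp add: algebra_simps)
    have "0 < ((b - a) - \<sigma>) - mon p (c0 / 2)"
      by (rule posI[of p]) (use p in \<open>auto simp: c0_def\<close>)
    then show False using 1 by simp
  qed
qed

lemma upper_bound:
  assumes endsI: "lc_interval_ends a b I" and XI: "X \<subseteq> I"
    and lb: "\<forall>t\<in>lc_cover_sums X. m \<le> t"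
  shows "m \<le> b - a"
proof (rule ccontr)
  assume "\<not> m \<le> b - a"
  then have "0 < m - (b - a)" by simp
  then obtain q where q: "coeff (m - (b - a)) q > 0" "\<forall>r<q. coeff (m - (b - a)) r = 0"
    using pos_lead by blast
  define D where "D n = mon (q + 1 + of_nat n) 1" for n :: nat
  define l where "l n = (case n of 0 \<Rightarrow> b - a | Suc j \<Rightarrow> D j - D (Suc j))" for n
  define T where "T n = (case n of 0 \<Rightarrow> I | Suc j \<Rightarrow> {x. a \<le> x \<and> x \<le> a + l n})" for n
  have Dpos: "0 < D n" for n unfolding D_def by (rule mon_pos) simp
  have lpos: "0 < l (Suc j)" for j
    unfolding l_def D_def by (rule posI[of "q + 1 + of_nat j"]) auto
  have Tends: "lc_interval_ends a (a + l n) (T n)" if n0: "n \<noteq> 0" for n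
  proof -
    obtain j where j: "n = Suc j" using n0 by (cases n) auto
    have 1: "a < a + l n" unfolding j using lpos[of j] by simp
    have 2: "T n = {x. a \<le> x \<and> x \<le> a + l n}" unfolding T_def j by simp
    show ?thesis unfolding lc_interval_ends_def lc_ops by (rule conjI[OF 1 disjI1[OF 2]])
  qed
  have lenT: "lc_length (T n) = l n" for n
  proof (cases n)
    case 0
    have "T n = I" "l n = b - a" unfolding T_def l_def 0 by simp_all
    then show ?thesis using length_eq[OF endsI] by simp
  next
    case (Suc j)
    then have "n \<noteq> 0" by simp
    from length_eq[OF Tends[OF this]] show ?thesis by simp
  qed
  have ps: "lc_psum l (Suc n) = ((b - a) + D 0) - D n" for n
    by (induction n) (simp_all add: l_def algebra_simps)
  have sums: "lc_sums l ((b - a) + D 0)"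
    unfolding lc_sums_def lc_tendsto_def lc_ops
  proof (intro allI impI)
    fix e :: levi_civita assume e: "0 < e"
    then obtain r where r: "coeff e r > 0" "\<forall>s<r. coeff e s = 0" using pos_lead by blast
    obtain N :: nat where N: "r - q - 1 < of_nat N" using reals_Archimedean2 by blast
    show "\<exists>N. \<forall>n\<ge>N. lc_abs (lc_psum l n - (b - a + D 0)) < e"
    proof (intro exI allI impI)
      fix n assume n: "Suc N \<le> n"
      then obtain j where j: "n = Suc j" "N \<le> j" by (metis Suc_le_D Suc_le_mono)
      have jr: "r < q + 1 + of_nat j" 
      proof -
        have "rat_of_nat N \<le> rat_of_nat j" using j(2) by simp
        then show ?thesis using N by linarith
      qed
      have 1: "D j < e"
      proof -
        have "0 < e - D j"
          by (rule posI[of r]) (use r jr in \<open>auto simp: D_def\<close>)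
        then show ?thesis by simp
      qed
      have eq: "lc_psum l n - (b - a + D 0) = - D j" unfolding j ps by (simp add: algebra_simps)
      show "lc_abs (lc_psum l n - (b - a + D 0)) < e"
        unfolding eq lc_abs_less using 1 Dpos[of j] e by (simp add: less_trans[of _ 0])
    qed
  qed
  have cov: "lc_cover T X"
    unfolding lc_cover_def
  proof (intro conjI allI)
    fix n show "lc_is_interval (T n)"
    proof (cases "n = 0")
      case True
      then have "T n = I" unfolding T_def by simp
      then show ?thesis using endsI unfolding lc_is_interval_def by blast
    next
      case False
      then show ?thesis using Tends[OF False] unfolding lc_is_interval_def by blast
    qed
  next
    have "T 0 = I" unfolding T_def by simp
    then show "X \<subseteq> (\<Union>n. T n)" using XI by blast
  next
    show "lc_summable (\<lambda>n. lc_length (T n))" unfolding lenT lc_summable_def using sums by blast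
  qed
  have sT: "lc_suminf (\<lambda>n. lc_length (T n)) = (b - a) + D 0" unfolding lenT by (rule suminf_eq[OF sums])
  have "(b - a) + D 0 \<in> lc_cover_sums X" unfolding lc_cover_sums_def
    by (rule CollectI, rule exI[of _ T]) (simp add: sT cov)
  then have 1: "m \<le> (b - a) + D 0" using lb by blast
  have "0 < (m - (b - a)) - D 0"
    by (rule posI[of q]) (use q in \<open>auto simp: D_def\<close>)
  then show False using 1 by (simp add: algebra_simps)
qed

theorem mainTheorem11:
  fixes a b :: levi_civita and I X :: "levi_civita set"
  assumes "lc_interval_ends a b I"
    and "X \<subseteq> I"
    and "lc_dense_in X I"
  shows "(\<forall>S. lc_cover S X \<longrightarrow> lc_le (lc_diff b a) (lc_suminf (\<lambda>n. lc_length (S n))))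
         \<and> outer_measurable X
         \<and> outer_measure X = lc_length I
         \<and> lc_length I = lc_diff b a"
proof -
  have lbs: "\<forall>S. lc_cover S X \<longrightarrow> b - a \<le> lc_suminf (\<lambda>n. lc_length (S n))"
    using lower_bound[OF assms] by blast
  have inf: "lc_is_inf (lc_cover_sums X) (b - a)"
    unfolding lc_is_inf_def lc_ops
  proof (intro conjI ballI allI impI)
    fix t assume "t \<in> lc_cover_sums X"
    then show "b - a \<le> t" using lbs unfolding lc_cover_sums_def by blast
  next
    fix m' assume "\<forall>t\<in>lc_cover_sums X. m' \<le> t"
    then show "m' \<le> b - a" using upper_bound[OF assms(1,2)] by blast
  qed
  have om: "outer_measure X = b - a"
    unfolding outer_measure_def
  proof (rule the_equality)
    show "lc_is_inf (lc_cover_sums X) (b - a)" by (rule inf)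
  next
    fix m assume "lc_is_inf (lc_cover_sums X) m"
    then show "m = b - a" using inf unfolding lc_is_inf_def lc_ops by (meson order.antisym)
  qed
  have "outer_measurable X" unfolding outer_measurable_def using inf by blast
  then show ?thesis unfolding lc_ops using lbs om length_eq[OF assms(1)] by simp
qed


end
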